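(* For every $n\ge1$ and every $\sigma\in S_n(123)$ (permutations of $[n]$ with no increasing subsequence of length $3$), $\mu(\sigma)=L'(\lambda(\sigma))$.
   Context: Dyck path of semilength $n$: lattice path from $(0,0)$ to $(2n,0)$ with steps $U=(1,1)$, $D=(1,-1)$, never below the $x$-axis. A return is a down step ending on the $x$-axis; a Dyck path is irreducible if it has exactly one return; every Dyck path $P$ factors uniquely as $P=P_1\cdots P_r$ with each $P_i$ irreducible (its irreducible components). If $P$ has ascents (maximal runs of $U$) of lengths $a_1,\dots,a_k$ and descents of lengths $d_1,\dots,d_k$ (left to right), with $A_i=a_1+\dots+a_i$, $D_i=d_1+\dots+d_i$, its ascent-descent code is $(A,D)$ with $A=A_1,\dots,A_{k-1}$, $D=D_1,\dots,D_{k-1}$; this determines $P$. $P$ is irreducible iff $A_i>D_i$ for all $i$. The map $L'$: for an irreducible path $P$ of semilength $n$ with code $A=A_1,\dots,A_h$, $D=D_1,\dots,D_h$, let $\{\hat A_1>\dots>\hat A_{n-2-h}\}=\{1,\dots,n-2\}\setminus\{A_1-1,\dots,A_h-1\}$ and $\{\hat D_1>\dots>\hat D_{n-2-h}\}=\{1,\dots,n-2\}\setminus\{D_1,\dots,D_h\}$; $L'(P)$ is the (irreducible) Dyck path of semilength $n$ with code $A'_i=n-\hat A_i$, $D'_i=n-1-\hat D_i$. For a general Dyck path with irreducible components $P_1\cdots P_r$, $L'(P_1\cdots P_r)=L'(P_r)\cdots L'(P_1)$; $L'$ of the empty path is empty. (This is the paper's variant of the Kreweras–Lalanne involution: reflect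 $P$ in a vertical line and replace each irreducible component $UXD$ by $U\,L(X)\,D$, $L$ the Kreweras–Lalanne involution.) For $\sigma=x_1\cdots x_n$: $x_i$ is a left-to-right (LTR) minimum if $x_i<x_j$ for all $j<i$; $x_i$ is a right-to-left (RTL) maximum if $x_i>x_j$ for all $j>i$. $\lambda(\sigma)$: write $\sigma=m_1w_1\cdots m_kw_k$ with $m_1>\dots>m_k$ the LTR minima and $w_i$ possibly empty words, $m_0=n+1$; $\lambda(\sigma)=U^{m_0-m_1}D^{|w_1|+1}\cdots U^{m_{k-1}-m_k}D^{|w_k|+1}$. $\mu(\sigma)$: write $\sigma=u_hM_h\cdots u_1M_1$ with $M_1<\dots<M_h$ the RTL maxima and $u_i$ possibly empty words, $M_0=0$; $\mu(\sigma)=U^{M_1-M_0}D^{|u_1|+1}U^{M_2-M_1}D^{|u_2|+1}\cdots U^{M_h-M_{h-1}}D^{|u_h|+1}$. *)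

theory Defs
  imports Main "HOL-Combinatorics.Multiset_Permutations"
begin

text \<open>Lattice-path steps: U = (1,1), D = (1,-1). A path is a list of steps.\<close>
datatype step = U | D

definition cnt :: "step \<Rightarrow> step list \<Rightarrow> nat" where
  "cnt s P = length (filter (\<lambda>t. t = s) P)"

definition dyck :: "step list \<Rightarrow> bool" where
  "dyck P \<longleftrightarrow> cnt U P = cnt D P \<and> (\<forall>k \<le> length P. cnt D (take k P) \<le> cnt U (take k P))"

text \<open>The ascent-descent code (A,D): A_i (resp. D_i) is the number
  of U (resp. D) steps before the i-th valley is left, i.e. a_1+...+a_i (resp. d_1+...+d_i).\<close>
definition valleys :: "step list \<Rightarrow> nat list" where
  "valleys P = filter (\<lambda>j. P ! j = D \<and> P ! (j+1) = U) [0..<length P - 1]"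

definition codeA :: "step list \<Rightarrow> nat list" where
  "codeA P = map (\<lambda>j. cnt U (take (j+1) P)) (valleys P)"

definition codeD :: "step list \<Rightarrow> nat list" where
  "codeD P = map (\<lambda>j. cnt D (take (j+1) P)) (valleys P)"

definition path_of_code :: "nat \<Rightarrow> nat list \<Rightarrow> nat list \<Rightarrow> step list" where
  "path_of_code n A Ds =
     (let As = 0 # A @ [n]; Dss = 0 # Ds @ [n] in
      concat (map (\<lambda>i. replicate (As ! (i+1) - As ! i) U @ replicate (Dss ! (i+1) - Dss ! i) D)
                  [0..<length A + 1]))"

text \<open>Returns: down steps ending on the x-axis (recorded as the length of the prefix ending there).
  Irreducible components: the factors between consecutive returns.\<close>
definition returns :: "step list \<Rightarrow> nat list" where
  "returns P = map (\<lambda>j. j+1)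
     (filter (\<lambda>j. P ! j = D \<and> cnt U (take (j+1) P) = cnt D (take (j+1) P)) [0..<length P])"

definition irreducible :: "step list \<Rightarrow> bool" where
  "irreducible P \<longleftrightarrow> dyck P \<and> length (returns P) = 1"

definition components :: "step list \<Rightarrow> step list list" where
  "components P = (let bs = 0 # returns P in
     map (\<lambda>i. drop (bs ! i) (take (bs ! (i+1)) P)) [0..<length (returns P)])"

definition Lirr :: "step list \<Rightarrow> step list" where
  "Lirr P = (let n = length P div 2; A = codeA P; Ds = codeD P;
      Ahat = rev (sorted_list_of_set ({1..n-2} - (\<lambda>a. a - 1) ` set A));
      Dhat = rev (sorted_list_of_set ({1..n-2} - set Ds))
    in path_of_code n (map (\<lambda>x. n - x) Ahat) (map (\<lambda>x. n - 1 - x) Dhat))"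

definition Lprime :: "step list \<Rightarrow> step list" where
  "Lprime P = concat (rev (map Lirr (components P)))"

fun lam_aux :: "nat \<Rightarrow> nat list \<Rightarrow> step list" where
  "lam_aux m [] = []"
| "lam_aux m (x # xs) =
     (if x < m then replicate (m - x) U @ [D] @ lam_aux x xs else D # lam_aux m xs)"

definition lam :: "nat list \<Rightarrow> step list" where
  "lam \<sigma> = lam_aux (length \<sigma> + 1) \<sigma>"

fun mu_aux :: "nat \<Rightarrow> nat list \<Rightarrow> step list" where
  "mu_aux m [] = []"
| "mu_aux m (x # xs) =
     (if m < x then replicate (x - m) U @ [D] @ mu_aux x xs else D # mu_aux m xs)"

definition mu :: "nat list \<Rightarrow> step list" where
  "mu \<sigma> = mu_aux 0 (rev \<sigma>)"

definition avoids123 :: "nat list \<Rightarrow> bool" where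
  "avoids123 \<sigma> \<longleftrightarrow>
     \<not> (\<exists>i j k. i < j \<and> j < k \<and> k < length \<sigma> \<and> \<sigma> ! i < \<sigma> ! j \<and> \<sigma> ! j < \<sigma> ! k)"

end

theory Submission
  imports Defs
begin

lemma cnt_Nil[simp]: "cnt s [] = 0" by (simp add: cnt_def)
lemma cnt_Cons[simp]: "cnt s (x#P) = (if x = s then 1 else 0) + cnt s P" by (simp add: cnt_def)
lemma cnt_append[simp]: "cnt s (P @ Q) = cnt s P + cnt s Q" by (simp add: cnt_def)
lemma cnt_replicate[simp]: "cnt s (replicate k t) = (if t = s then k else 0)" by (induction k) auto

lemma upt_len_Cons: "P \<noteq> [] \<Longrightarrow> [0..<length P] = 0 # map Suc [0..<length P - 1]"
  by (cases P) (simp_all add: map_Suc_upt upt_conv_Cons del: upt_Suc)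

lemma valleys_Cons:
  "valleys (x#P) = (if x = D \<and> P \<noteq> [] \<and> hd P = U then [0] else []) @ map Suc (valleys P)"
proof (cases "P = []")
  case True then show ?thesis by (simp add: valleys_def)
next
  case False
  have "valleys (x#P) = filter (\<lambda>j. (x#P) ! j = D \<and> (x#P) ! (j+1) = U) [0..<length P]"
    by (simp add: valleys_def)
  also have "\<dots> = filter (\<lambda>j. (x#P) ! j = D \<and> (x#P) ! (j+1) = U) (0 # map Suc [0..<length P - 1])"
    using upt_len_Cons[OF False] by simp
  also have "\<dots> = (if x = D \<and> hd P = U then [0] else []) @ map Suc (valleys P)"
    using False by (simp add: valleys_def filter_map o_def hd_conv_nth)
  finally show ?thesis using False by simp
qed

lemma codeA_Cons:
  "codeA (x#P) = (if x = D \<and> P \<noteq> [] \<and> hd P = U then [0] else []) @ map (\<lambda>v. v + (if x = U then 1 else 0)) (codeA P)"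
  by (simp add: codeA_def valleys_Cons o_def)

lemma codeD_Cons:
  "codeD (x#P) = (if x = D \<and> P \<noteq> [] \<and> hd P = U then [1] else []) @ map (\<lambda>v. v + (if x = D then 1 else 0)) (codeD P)"
  by (simp add: codeD_def valleys_Cons o_def)

lemma cnt_pos_iff: "cnt s xs > 0 \<longleftrightarrow> s \<in> set xs"
  by (induction xs) auto

lemma codeD_pos: "v \<in> set (codeD P) \<Longrightarrow> v > 0"
proof -
  assume "v \<in> set (codeD P)"
  then obtain j where j: "j \<in> set (valleys P)" and v: "v = cnt D (take (j+1) P)"
    by (auto simp: codeD_def)
  from j have "j < length P" "P ! j = D" by (auto simp: valleys_def)
  then have "D \<in> set (take (j+1) P)"
    using nth_mem[of j "take (j+1) P"] by simp
  then show ?thesis using v cnt_pos_iff by simp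
qed

lemma codeA_pos: "P \<noteq> [] \<Longrightarrow> hd P = U \<Longrightarrow> v \<in> set (codeA P) \<Longrightarrow> v > 0"
proof -
  assume "P \<noteq> []" "hd P = U" "v \<in> set (codeA P)"
  then obtain P' where P: "P = U # P'" by (cases P) auto
  from \<open>v \<in> set (codeA P)\<close> obtain j where v: "v = cnt U (take (j+1) P)"
    by (auto simp: codeA_def)
  then show ?thesis using P by simp
qed

lemma codeA_sorted: "sorted_wrt (<) (codeA P)"
proof (induction P)
  case Nil then show ?case by (simp add: codeA_def valleys_def)
next
  case (Cons x P)
  have m: "sorted_wrt (<) (map (\<lambda>v. v + c) (codeA P))" for c
    using Cons by (simp add: sorted_wrt_map)
  show ?case
  proof (cases "x = D \<and> P \<noteq> [] \<and> hd P = U")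
    case True
    then show ?thesis using m[of 0] codeA_pos[of P] by (simp add: codeA_Cons)
  next
    case False
    then show ?thesis using m by (auto simp add: codeA_Cons)
  qed
qed

lemma codeD_sorted: "sorted_wrt (<) (codeD P)"
proof (induction P)
  case Nil then show ?case by (simp add: codeD_def valleys_def)
next
  case (Cons x P)
  have m: "sorted_wrt (<) (map (\<lambda>v. v + c) (codeD P))" for c
    using Cons by (simp add: sorted_wrt_map)
  show ?case
  proof (cases "x = D \<and> P \<noteq> [] \<and> hd P = U")
    case True
    then show ?thesis using m[of 1] codeD_pos[of _ P] by (auto simp add: codeD_Cons)
  next
    case False
    then show ?thesis using m by (auto simp add: codeD_Cons)
  qed
qed

lemma length_codes: "length (codeA P) = length (codeD P)"
  by (simp add: codeA_def codeD_def)

fun pc :: "nat \<Rightarrow> nat \<Rightarrow> nat \<Rightarrow> nat \<Rightarrow> nat list \<Rightarrow> nat list \<Rightarrow> step list" where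
  "pc pa pd na nd [] [] = replicate (na - pa) U @ replicate (nd - pd) D"
| "pc pa pd na nd (a#A) (d#Ds) = replicate (a - pa) U @ replicate (d - pd) D @ pc a d na nd A Ds"
| "pc pa pd na nd _ _ = []"

lemma pc_gen:
  "length A = length Ds \<Longrightarrow>
   concat (map (\<lambda>i. replicate ((pa#A@[na]) ! (i+1) - (pa#A@[na]) ! i) U @
                    replicate ((pd#Ds@[nd]) ! (i+1) - (pd#Ds@[nd]) ! i) D) [0..<length A + 1])
   = pc pa pd na nd A Ds"
proof (induction A arbitrary: pa pd Ds)
  case Nil then show ?case by simp
next
  case (Cons a A)
  then obtain d Ds' where Ds: "Ds = d # Ds'" by (cases Ds) auto
  have "[0..<length (a#A) + 1] = 0 # map Suc [0..<length A + 1]"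
    by (simp add: map_Suc_upt upt_conv_Cons del: upt_Suc)
  then show ?case using Cons.IH[of Ds' a d] Cons.prems Ds by (simp add: o_def)
qed

lemma path_of_code_pc: "length A = length Ds \<Longrightarrow> path_of_code n A Ds = pc 0 0 n n A Ds"
  unfolding path_of_code_def Let_def using pc_gen[of A Ds 0 n 0 n] by simp

lemma codes_repU:
  "codeA (replicate a U @ Q) = map (\<lambda>v. v + a) (codeA Q) \<and> codeD (replicate a U @ Q) = codeD Q"
  by (induction a) (auto simp: codeA_Cons codeD_Cons o_def)

lemma codes_repD:
  "b \<ge> 1 \<Longrightarrow> codeA (replicate b D @ Q) = (if Q \<noteq> [] \<and> hd Q = U then [0] else []) @ codeA Q \<and>
     codeD (replicate b D @ Q) = (if Q \<noteq> [] \<and> hd Q = U then [b] else []) @ map (\<lambda>v. v + b) (codeD Q)"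
proof (induction b rule: dec_induct)
  case base then show ?case by (simp add: codeA_Cons codeD_Cons)
next
  case (step b)
  then show ?case by (auto simp: codeA_Cons codeD_Cons o_def)
qed

lemma pc_codes:
  "P = [] \<or> last P = D \<Longrightarrow>
   pc pa pd (pa + cnt U P) (pd + cnt D P) (map (\<lambda>v. v + pa) (codeA P)) (map (\<lambda>v. v + pd) (codeD P)) = P"
proof (induction "length P" arbitrary: P pa pd rule: less_induct)
  case less
  show ?case
  proof (cases "P = []")
    case True then show ?thesis by (simp add: codeA_def codeD_def valleys_def)
  next
    case False
    define a where "a = length (takeWhile (\<lambda>s. s = U) P)"
    define R where "R = dropWhile (\<lambda>s. s = U) P"
    have PR: "P = replicate a U @ R"
      unfolding a_def R_def
      by (metis (mono_tags) replicate_length_same set_takeWhileD takeWhile_dropWhile_id)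
    have "R \<noteq> []"
    proof
      assume "R = []"
      then have "P = replicate a U" using PR by simp
      then show False using False less.prems by (cases a) (auto simp: last_replicate split: if_splits)
    qed
    then have hdR: "hd R = D" unfolding R_def
      by (metis (full_types) hd_dropWhile step.exhaust)
    define b where "b = length (takeWhile (\<lambda>s. s = D) R)"
    define P' where "P' = dropWhile (\<lambda>s. s = D) R"
    have RP: "R = replicate b D @ P'"
      unfolding b_def P'_def
      by (metis (mono_tags) replicate_length_same set_takeWhileD takeWhile_dropWhile_id)
    have b1: "b \<ge> 1" unfolding b_def using \<open>R \<noteq> []\<close> hdR
      by (cases R) auto
    have hdP': "P' \<noteq> [] \<Longrightarrow> hd P' = U" unfolding P'_def
      by (metis (full_types) hd_dropWhile step.exhaust)
    have P: "P = replicate a U @ replicate b D @ P'" using PR RP by simp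
    have lastP': "P' = [] \<or> last P' = D" using less.prems P False by (cases "P' = []") (auto simp: last_append)
    have len: "length P' < length P" using P b1 by simp
    show ?thesis
    proof (cases "P' = []")
      case True
      then show ?thesis using P b1 codes_repU[of a "replicate b D @ P'"] codes_repD[OF b1, of P']
        by (simp add: codeA_def codeD_def valleys_def)
    next
      case False
      have cA: "codeA P = a # map (\<lambda>v. v + a) (codeA P')"
        using P codes_repU[of a "replicate b D @ P'"] codes_repD[OF b1, of P'] False hdP' by simp
      have cD: "codeD P = b # map (\<lambda>v. v + b) (codeD P')"
        using P codes_repU[of a "replicate b D @ P'"] codes_repD[OF b1, of P'] False hdP' by simp
      have IH: "pc (pa + a) (pd + b) (pa + a + cnt U P') (pd + b + cnt D P')
         (map (\<lambda>v. v + (pa + a)) (codeA P')) (map (\<lambda>v. v + (pd + b)) (codeD P')) = P'"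
        using less.hyps[OF len lastP'] .
      have cU: "cnt U P = a + cnt U P'" and cDD: "cnt D P = b + cnt D P'" using P by simp_all
      have "pc pa pd (pa + cnt U P) (pd + cnt D P) (map (\<lambda>v. v + pa) (codeA P)) (map (\<lambda>v. v + pd) (codeD P))
        = replicate a U @ replicate b D @ P'"
        using IH unfolding cA cD cU cDD by (simp add: o_def add.assoc add.commute add.left_commute)
      then show ?thesis using P by simp
    qed
  qed
qed

lemma path_of_code_codes:
  "P \<noteq> [] \<Longrightarrow> last P = D \<Longrightarrow> cnt U P = n \<Longrightarrow> cnt D P = n \<Longrightarrow> path_of_code n (codeA P) (codeD P) = P"
  using pc_codes[of P 0 0] path_of_code_pc[OF length_codes] by simp

definition fm :: "nat \<Rightarrow> nat list \<Rightarrow> nat" where "fm m xs = foldl min m xs"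

lemma fm_Nil[simp]: "fm m [] = m" by (simp add: fm_def)
lemma fm_Cons[simp]: "fm m (x#xs) = fm (min m x) xs" by (simp add: fm_def)
lemma fm_append: "fm m (xs @ ys) = fm (fm m xs) ys" by (simp add: fm_def)
lemma fm_le: "fm m xs \<le> m" by (induction xs arbitrary: m) (auto, meson le_trans min.cobounded1)
lemma fm_eq: "fm m ys = (if ys = [] then m else min m (Min (set ys)))"
proof (induction ys arbitrary: m)
  case Nil then show ?case by simp
next
  case (Cons y ys) then show ?case by (cases "ys = []") (auto simp: min.assoc)
qed

lemma lam_aux_Cons_eq: "lam_aux m (x#xs) = replicate (m - min m x) U @ D # lam_aux (min m x) xs"
  by (auto simp: min_def)

lemma lam_aux_append: "lam_aux m (xs @ ys) = lam_aux m xs @ lam_aux (fm m xs) ys"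
  by (induction xs arbitrary: m) (simp_all add: lam_aux_Cons_eq)

lemma cnt_lam: "cnt U (lam_aux m xs) = m - fm m xs \<and> cnt D (lam_aux m xs) = length xs"
proof (induction xs arbitrary: m)
  case Nil then show ?case by simp
next
  case (Cons x xs)
  have "fm (min m x) xs \<le> min m x" by (rule fm_le)
  then show ?case using Cons[of "min m x"] by (simp add: lam_aux_Cons_eq del: lam_aux.simps)
qed

lemma lam_aux_shift: "lam_aux (m + c) (map (\<lambda>x. x + c) xs) = lam_aux m xs"
  by (induction xs arbitrary: m) auto

lemma mu_aux_lam: "\<forall>x\<in>set ys. x \<le> N \<Longrightarrow> m \<le> N \<Longrightarrow>
   mu_aux m ys = lam_aux (Suc N - m) (map (\<lambda>x. Suc N - x) ys)"
  by (induction ys arbitrary: m) auto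

lemma lam_aux_Nil_iff: "lam_aux m xs = [] \<longleftrightarrow> xs = []"
  by (cases xs) (auto simp: lam_aux_Cons_eq)

lemma last_lam: "xs \<noteq> [] \<Longrightarrow> last (lam_aux m xs) = D"
  by (induction xs arbitrary: m) (auto simp: lam_aux_Cons_eq lam_aux_Nil_iff last_append simp del: lam_aux.simps)

lemma hd_lam: "xs \<noteq> [] \<Longrightarrow> hd (lam_aux m xs) = U \<longleftrightarrow> hd xs < m"
  by (cases xs) (auto simp: lam_aux_Cons_eq)

lemma idx_split:
  "{f i | i. 0 < i \<and> i < Suc L \<and> Q i} =
   (if 0 < L \<and> Q 1 then {f 1} else {}) \<union> {f (Suc j) | j. 0 < j \<and> j < L \<and> Q (Suc j)}"
  (is "?l = ?r")
proof
  show "?l \<subseteq> ?r"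
  proof
    fix v assume "v \<in> ?l"
    then obtain i where i: "v = f i" "0 < i" "i < Suc L" "Q i" by blast
    show "v \<in> ?r"
    proof (cases "i = 1")
      case True then show ?thesis using i by auto
    next
      case False
      then obtain j where "i = Suc j" "0 < j" using i by (cases i) auto
      then show ?thesis using i by auto
    qed
  qed
next
  show "?r \<subseteq> ?l" by (auto split: if_splits)
qed

lemma idx_split2:
  "{i. 0 < i \<and> i < Suc L \<and> Q i} =
   (if 0 < L \<and> Q 1 then {1} else {}) \<union> Suc ` {j. 0 < j \<and> j < L \<and> Q (Suc j)}"
  using idx_split[of id L Q] by (auto simp: image_def)

lemma codes_lam:
  "set (codeA (lam_aux m xs)) = {m - fm m (take i xs) | i. 0 < i \<and> i < length xs \<and> xs!i < fm m (take i xs)} \<and>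
   set (codeD (lam_aux m xs)) = {i. 0 < i \<and> i < length xs \<and> xs!i < fm m (take i xs)}"
proof (induction xs arbitrary: m)
  case Nil then show ?case by (simp add: codeA_def codeD_def valleys_def)
next
  case (Cons x xs)
  define m' where "m' = min m x"
  define a where "a = m - m'"
  define L where "L = lam_aux m' xs"
  have eq: "lam_aux m (x#xs) = replicate a U @ replicate 1 D @ L"
    by (simp add: lam_aux_Cons_eq a_def m'_def L_def)
  have c: "(L \<noteq> [] \<and> hd L = U) \<longleftrightarrow> (0 < length xs \<and> xs ! 0 < m')"
    unfolding L_def using hd_lam[of xs m'] lam_aux_Nil_iff[of m' xs] by (cases xs) auto
  have cA: "set (codeA (lam_aux m (x#xs))) = (\<lambda>v. v + a) ` ((if 0 < length xs \<and> xs ! 0 < m' then {0} else {}) \<union> set (codeA L))"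
    unfolding eq using codes_repU[of a "replicate 1 D @ L"] codes_repD[of 1 L] c by auto
  have cD: "set (codeD (lam_aux m (x#xs))) = ((if 0 < length xs \<and> xs ! 0 < m' then {1} else {}) \<union> Suc ` set (codeD L))"
    unfolding eq using codes_repU[of a "replicate 1 D @ L"] codes_repD[of 1 L] c by auto
  have fmle: "fm m' t \<le> m'" for t by (rule fm_le)
  have m'le: "m' \<le> m" by (simp add: m'_def)
  have A: "{m - fm m (take i (x#xs)) | i. 0 < i \<and> i < length (x#xs) \<and> (x#xs)!i < fm m (take i (x#xs))}
     = (if 0 < length xs \<and> xs!0 < m' then {a} else {}) \<union>
       {m - fm m' (take j xs) | j. 0 < j \<and> j < length xs \<and> xs!j < fm m' (take j xs)}"
    using idx_split[of "\<lambda>i. m - fm m (take i (x#xs))" "length xs" "\<lambda>i. (x#xs)!i < fm m (take i (x#xs))"]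
    by (simp add: m'_def a_def)
  have A2: "{m - fm m' (take j xs) | j. 0 < j \<and> j < length xs \<and> xs!j < fm m' (take j xs)}
      = (\<lambda>v. v + a) ` {m' - fm m' (take j xs) | j. 0 < j \<and> j < length xs \<and> xs!j < fm m' (take j xs)}"
  proof -
    have "m - fm m' t = (m' - fm m' t) + a" for t using fmle[of t] m'le by (simp add: a_def)
    then show ?thesis by (auto simp: image_def)
  qed
  have Dq: "{i. 0 < i \<and> i < length (x#xs) \<and> (x#xs)!i < fm m (take i (x#xs))}
     = (if 0 < length xs \<and> xs!0 < m' then {1} else {}) \<union>
       Suc ` {j. 0 < j \<and> j < length xs \<and> xs!j < fm m' (take j xs)}"
    using idx_split2[of "length xs" "\<lambda>i. (x#xs)!i < fm m (take i (x#xs))"]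
    by (simp add: m'_def)
  show ?case
    using Cons.IH[of m'] unfolding cA cD A A2 Dq L_def by auto
qed

definition returnsH :: "int \<Rightarrow> step list \<Rightarrow> nat list" where
  "returnsH h P = map (\<lambda>j. j+1)
     (filter (\<lambda>j. P ! j = D \<and> h + int (cnt U (take (j+1) P)) - int (cnt D (take (j+1) P)) = 0) [0..<length P])"

lemma returns_H: "returns P = returnsH 0 P"
  unfolding returns_def returnsH_def by simp

lemma returnsH_Nil[simp]: "returnsH h [] = []" by (simp add: returnsH_def)

lemma returnsH_Cons:
  "returnsH h (x#P) = (if x = D \<and> h = 1 then [1] else []) @ map Suc (returnsH (h + (if x = U then 1 else -1)) P)"
proof -
  have u: "[0..<length (x#P)] = 0 # map Suc [0..<length P]"
    using upt_len_Cons[of "x#P"] by simp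
  show ?thesis
    unfolding returnsH_def u by (cases x) (auto simp: filter_map o_def algebra_simps)
qed

lemma returnsH_append:
  "returnsH h (Q@R) = returnsH h Q @ map (\<lambda>j. j + length Q) (returnsH (h + int (cnt U Q) - int (cnt D Q)) R)"
proof (induction Q arbitrary: h)
  case Nil then show ?case by simp
next
  case (Cons x Q)
  show ?case unfolding append_Cons returnsH_Cons Cons.IH
    by (cases x) (auto simp: o_def algebra_simps)
qed

lemma returnsH_repU: "returnsH h (replicate a U @ Q) = map (\<lambda>j. j + a) (returnsH (h + int a) Q)"
  by (induction a arbitrary: h) (auto simp: returnsH_Cons o_def algebra_simps)

lemma length_lam: "length (lam_aux m xs) = (m - fm m xs) + length xs"
proof -
  have "length P = cnt U P + cnt D P" for P
    by (induction P) (auto, metis (full_types) step.exhaust)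
  then show ?thesis using cnt_lam[of m xs] by simp
qed

lemma returns_lam:
  "set (returnsH h (lam_aux m xs)) = {length (lam_aux m (take i xs)) | i. 0 < i \<and> i \<le> length xs \<and>
       h + int m - int (fm m (take i xs)) - int i = 0}"
proof (induction xs arbitrary: m h)
  case Nil then show ?case by simp
next
  case (Cons x xs)
  define m' where "m' = min m x"
  define a where "a = m - m'"
  define L where "L = lam_aux m' xs"
  have m'le: "m' \<le> m" by (simp add: m'_def)
  have eq: "lam_aux m (x#xs) = replicate a U @ D # L"
    by (simp add: lam_aux_Cons_eq a_def m'_def L_def)
  have S: "set (returnsH h (lam_aux m (x#xs))) = (if h + int a = 1 then {a+1} else {}) \<union>
     (\<lambda>v. v + (a + 1)) ` set (returnsH (h + int a - 1) L)"
    unfolding eq returnsH_repU returnsH_Cons by (auto simp: image_def)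
  have fmle: "fm m' t \<le> m'" for t by (rule fm_le)
  have R: "{length (lam_aux m (take i (x#xs))) | i. 0 < i \<and> i \<le> length (x#xs) \<and>
       h + int m - int (fm m (take i (x#xs))) - int i = 0}
     = (if 0 < Suc (length xs) \<and> h + int m - int m' - 1 = 0 then {a + 1} else {}) \<union>
       {length (lam_aux m (take (Suc j) (x#xs))) | j. 0 < j \<and> j < Suc (length xs) \<and>
           h + int m - int (fm m (take (Suc j) (x#xs))) - int (Suc j) = 0}"
    using idx_split[of "\<lambda>i. length (lam_aux m (take i (x#xs)))" "Suc (length xs)"
        "\<lambda>i. h + int m - int (fm m (take i (x#xs))) - int i = 0"]
    using lam_aux.simps(1)[of "min m x"] by (simp add: m'_def a_def lam_aux_Cons_eq less_Suc_eq_le del: lam_aux.simps)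
  have R2: "{length (lam_aux m (take (Suc j) (x#xs))) | j. 0 < j \<and> j < Suc (length xs) \<and>
           h + int m - int (fm m (take (Suc j) (x#xs))) - int (Suc j) = 0}
     = (\<lambda>v. v + (a + 1)) ` {length (lam_aux m' (take j xs)) | j. 0 < j \<and> j \<le> length xs \<and>
           (h + int a - 1) + int m' - int (fm m' (take j xs)) - int j = 0}"
  proof -
    have l: "length (lam_aux m (take (Suc j) (x#xs))) = length (lam_aux m' (take j xs)) + (a + 1)" for j
      by (simp add: lam_aux_Cons_eq a_def m'_def del: lam_aux.simps)
    have c: "(h + int m - int (fm m (take (Suc j) (x#xs))) - int (Suc j) = 0) =
        ((h + int a - 1) + int m' - int (fm m' (take j xs)) - int j = 0)" for j
      using m'le fmle[of "take j xs"] by (simp add: a_def m'_def of_nat_diff; linarith)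
    show ?thesis unfolding l c by (auto simp: image_def less_Suc_eq_le)
  qed
  have ia: "int a = int m - int m'" using m'le by (simp add: a_def)
  have IH: "set (returnsH (h + int a - 1) L) = {length (lam_aux m' (take j xs)) | j. 0 < j \<and> j \<le> length xs \<and>
           (h + int a - 1) + int m' - int (fm m' (take j xs)) - int j = 0}"
    unfolding L_def by (rule Cons.IH)
  have c1: "(h + int a = 1) = (h + int m - int m' - 1 = 0)" using ia by linarith
  have "set (returnsH h (lam_aux m (x#xs))) = (if h + int a = 1 then {a+1} else {}) \<union>
     (\<lambda>v. v + (a + 1)) ` {length (lam_aux m' (take j xs)) | j. 0 < j \<and> j \<le> length xs \<and>
           (h + int a - 1) + int m' - int (fm m' (take j xs)) - int j = 0}"
    unfolding S IH ..
  also have "\<dots> = (if 0 < Suc (length xs) \<and> h + int m - int m' - 1 = 0 then {a + 1} else {}) \<union>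
       {length (lam_aux m (take (Suc j) (x#xs))) | j. 0 < j \<and> j < Suc (length xs) \<and>
           h + int m - int (fm m (take (Suc j) (x#xs))) - int (Suc j) = 0}"
    by (simp only: R2 c1 zero_less_Suc simp_thms)
  also have "\<dots> = {length (lam_aux m (take i (x#xs))) | i. 0 < i \<and> i \<le> length (x#xs) \<and>
       h + int m - int (fm m (take i (x#xs))) - int i = 0}"
    by (rule R[symmetric])
  finally show ?case .
qed

lemma components_Nil: "components [] = []"
  by (simp add: components_def returns_def)

lemma components_app:
  assumes "returns (Q@R) = length Q # map (\<lambda>j. j + length Q) (returns R)"
  shows "components (Q@R) = Q # components R"
proof -
  define rs where "rs = returns R"
  define bs where "bs = 0 # length Q # map (\<lambda>j. j + length Q) rs"
  have nth: "(length Q # map (\<lambda>j. j + length Q) rs) ! i = (0 # rs) ! i + length Q" if "i \<le> length rs" for i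
    using that by (cases i) auto
  have u: "[0..<length (returns (Q@R))] = 0 # map Suc [0..<length rs]"
    using assms by (simp add: rs_def map_Suc_upt upt_conv_Cons del: upt_Suc)
  have el: "drop (bs ! Suc i) (take (bs ! Suc (Suc i)) (Q@R)) = drop ((0#rs)!i) (take ((0#rs)!(Suc i)) R)"
    if "i < length rs" for i
  proof -
    have "bs ! Suc i = (0 # rs) ! i + length Q" using nth[of i] that by (simp add: bs_def)
    moreover have "bs ! Suc (Suc i) = (0 # rs) ! Suc i + length Q"
      using nth[of "Suc i"] that by (simp add: bs_def del: nth_Cons_Suc)
    ultimately show ?thesis by (simp add: take_append drop_append)
  qed
  have "components (Q@R) = map (\<lambda>i. drop (bs ! i) (take (bs ! (i+1)) (Q@R))) (0 # map Suc [0..<length rs])"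
    unfolding components_def Let_def u using assms by (simp add: bs_def rs_def)
  also have "\<dots> = Q # map (\<lambda>i. drop (bs ! Suc i) (take (bs ! Suc (Suc i)) (Q@R))) [0..<length rs]"
    by (simp add: bs_def o_def)
  also have "\<dots> = Q # map (\<lambda>i. drop ((0#rs)!i) (take ((0#rs)!(Suc i)) R)) [0..<length rs]"
    using el by simp
  also have "\<dots> = Q # components R"
    unfolding components_def Let_def rs_def by simp
  finally show ?thesis .
qed

lemma Lprime_app:
  assumes "returns Q = [length Q]" "cnt U Q = cnt D Q"
  shows "Lprime (Q @ R) = Lprime R @ Lirr Q"
proof -
  have "returns (Q@R) = length Q # map (\<lambda>j. j + length Q) (returns R)"
    using assms unfolding returns_H returnsH_append by simp
  then show ?thesis unfolding Lprime_def components_app[OF \<open>returns (Q@R) = _\<close>] by simp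
qed

definition ltrmin :: "nat list \<Rightarrow> nat \<Rightarrow> bool" where
  "ltrmin t p \<longleftrightarrow> (\<forall>j<p. t ! p < t ! j)"
definition rtlmax :: "nat list \<Rightarrow> nat \<Rightarrow> bool" where
  "rtlmax t p \<longleftrightarrow> (\<forall>j. p < j \<and> j < length t \<longrightarrow> t ! j < t ! p)"
definition rc :: "nat list \<Rightarrow> nat list" where
  "rc t = map (\<lambda>x. Suc (length t) - x) (rev t)"
definition indec :: "nat list \<Rightarrow> bool" where
  "indec t \<longleftrightarrow> (\<forall>j. 0 < j \<and> j < length t \<longrightarrow> set (take j t) \<noteq> {length t - j + 1..length t})"
definition isperm :: "nat list \<Rightarrow> nat \<Rightarrow> bool" where
  "isperm t k \<longleftrightarrow> distinct t \<and> set t = {1..k} \<and> length t = k"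

lemma set_take_nth: "i \<le> length t \<Longrightarrow> set (take i t) = {t ! j | j. j < i}"
proof -
  assume a: "i \<le> length t"
  have "x \<in> set (take i t) \<longleftrightarrow> (\<exists>j<i. t ! j = x)" for x
  proof
    assume "x \<in> set (take i t)"
    then obtain j where "j < length (take i t)" "take i t ! j = x" by (auto simp: in_set_conv_nth)
    then show "\<exists>j<i. t ! j = x" by auto
  next
    assume "\<exists>j<i. t ! j = x"
    then obtain j where "j < i" "t ! j = x" by blast
    then have "take i t ! j = x" "j < length (take i t)" using a by auto
    then show "x \<in> set (take i t)" by (metis nth_mem)
  qed
  then show ?thesis by auto
qed

lemma fm_take: "\<forall>x\<in>set t. x < M \<Longrightarrow> 0 < i \<Longrightarrow> i \<le> length t \<Longrightarrow> fm M (take i t) = Min (set (take i t))"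
proof -
  assume a: "\<forall>x\<in>set t. x < M" "0 < i" "i \<le> length t"
  then have ne: "take i t \<noteq> []" by auto
  have "Min (set (take i t)) \<in> set (take i t)" using ne by simp
  then have "Min (set (take i t)) \<in> set t" by (rule in_set_takeD)
  then have "Min (set (take i t)) < M" using a(1) by simp
  then show ?thesis using ne by (simp add: fm_eq)
qed

lemma ltr_iff: "distinct t \<Longrightarrow> \<forall>x\<in>set t. x < M \<Longrightarrow> 0 < i \<Longrightarrow> i < length t \<Longrightarrow>
   t ! i < fm M (take i t) \<longleftrightarrow> ltrmin t i"
proof -
  assume a: "distinct t" "\<forall>x\<in>set t. x < M" "0 < i" "i < length t"
  have ne: "set (take i t) \<noteq> {}" using a by auto
  have "t ! i < fm M (take i t) \<longleftrightarrow> (\<forall>y\<in>set (take i t). t ! i < y)"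
    using fm_take[OF a(2) a(3)] a(4) ne by simp
  also have "\<dots> \<longleftrightarrow> ltrmin t i" using a(4) unfolding ltrmin_def set_take_nth[OF less_imp_le[OF a(4)]] by auto
  finally show ?thesis .
qed

lemma perm_vals: "isperm t k \<Longrightarrow> p < k \<Longrightarrow> 1 \<le> t ! p \<and> t ! p \<le> k"
proof -
  assume "isperm t k" "p < k"
  then have "t ! p \<in> set t" "set t = {1..k}" by (auto simp: isperm_def)
  then show ?thesis by simp
qed

lemma perm_lt: "isperm t k \<Longrightarrow> \<forall>x\<in>set t. x < Suc k"
  unfolding isperm_def by auto

lemma R1:
  assumes P: "isperm t k"
  shows "{fm (Suc k) (take i t) | i. 0 < i \<and> i < k \<and> t ! i < fm (Suc k) (take i t)}
       = {t ! p | p. p < k \<and> ltrmin t p} - {1}"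
  (is "?L = ?R")
proof
  have dist: "distinct t" and len: "length t = k" and st: "set t = {1..k}" using P by (auto simp: isperm_def)
  show "?L \<subseteq> ?R"
  proof
    fix v assume "v \<in> ?L"
    then obtain i where i: "v = fm (Suc k) (take i t)" "0 < i" "i < k" "t ! i < v" by blast
    have vM: "v = Min (set (take i t))" using fm_take[OF perm_lt[OF P] i(2)] i len by simp
    have fin: "finite (set (take i t))" "set (take i t) \<noteq> {}" using i len by auto
    have "v \<in> set (take i t)" using vM fin by simp
    then obtain p where p: "p < i" "t ! p = v" using i len by (auto simp: set_take_nth)
    have "ltrmin t p"
      unfolding ltrmin_def
    proof (intro allI impI)
      fix j assume "j < p"
      then have "t ! j \<in> set (take i t)" using p i len by (auto simp: set_take_nth)
      then have "v \<le> t ! j" using vM fin by simp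
      moreover have "t ! j \<noteq> t ! p"
      proof -
        have jl: "j < length t" and pl: "p < length t" using \<open>j < p\<close> p i len by simp_all
        show ?thesis using nth_eq_iff_index_eq[OF dist jl pl] \<open>j < p\<close> by simp
      qed
      ultimately show "t ! p < t ! j" using p by simp
    qed
    moreover have "v \<noteq> 1" using i(4) perm_vals[OF P i(3)] by simp
    moreover have "p < k" using p i by simp
    ultimately show "v \<in> ?R" using p(2) by blast
  qed
next
  have dist: "distinct t" and len: "length t = k" and st: "set t = {1..k}" using P by (auto simp: isperm_def)
  show "?R \<subseteq> ?L"
  proof
    fix v assume "v \<in> ?R"
    then obtain p where p: "p < k" "ltrmin t p" "t ! p = v" "v \<noteq> 1" by blast
    have "1 \<in> set t" using st p by auto
    then obtain q where q: "q < k" "t ! q = 1" using len by (auto simp: in_set_conv_nth)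
    have "q \<noteq> p" using p q by auto
    have "\<not> q < p" using p(2) q p(3) p(4) perm_vals[OF P p(1)] unfolding ltrmin_def by (metis less_one not_le)
    then have pq: "p < q" using \<open>q \<noteq> p\<close> by simp
    have ex: "p < q \<and> q < k \<and> t ! q < t ! p" using pq q p perm_vals[OF P p(1)] by simp
    define i where "i = (LEAST i. p < i \<and> i < k \<and> t ! i < t ! p)"
    have i: "p < i \<and> i < k \<and> t ! i < t ! p" unfolding i_def by (rule LeastI[of "\<lambda>i. p < i \<and> i < k \<and> t ! i < t ! p" q, OF ex])
    have nl: "\<not> (t ! j < t ! p)" if "p < j" "j < i" for j
    proof
      assume "t ! j < t ! p"
      then have "i \<le> j" unfolding i_def using that i by (intro Least_le) simp
      then show False using that by simp
    qed
    have fin: "finite (set (take i t))" by simp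
    have Mi: "Min (set (take i t)) = t ! p"
    proof (rule Min_eqI[OF fin])
      fix y assume "y \<in> set (take i t)"
      then obtain j where j: "j < i" "y = t ! j" using i len by (auto simp: set_take_nth)
      show "t ! p \<le> y"
      proof (cases "j < p")
        case True then show ?thesis using p(2) j unfolding ltrmin_def by (simp add: less_imp_le)
      next
        case False then show ?thesis using nl[of j] j by (cases "j = p") auto
      qed
    next
      show "t ! p \<in> set (take i t)" using i len by (auto simp: set_take_nth)
    qed
    have "fm (Suc k) (take i t) = v" using fm_take[OF perm_lt[OF P], of i] i len Mi p by simp
    moreover have "0 < i" "t ! i < v" using i p by auto
    ultimately show "v \<in> ?L" using i by blast
  qed
qed

lemma perm_distinct_nth: "isperm t k \<Longrightarrow> i < k \<Longrightarrow> j < k \<Longrightarrow> t ! i = t ! j \<longleftrightarrow> i = j"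
  unfolding isperm_def using nth_eq_iff_index_eq by auto

lemma part1:
  assumes P: "isperm t k" and av: "avoids123 t" and p: "p < k"
  shows "ltrmin t p \<or> rtlmax t p"
proof (rule ccontr)
  assume "\<not> (ltrmin t p \<or> rtlmax t p)"
  then obtain j l where j: "j < p" "\<not> t ! p < t ! j" and l: "p < l" "l < length t" "\<not> t ! l < t ! p"
    unfolding ltrmin_def rtlmax_def by blast
  have len: "length t = k" using P by (simp add: isperm_def)
  have "t ! j \<noteq> t ! p" using perm_distinct_nth[OF P, of j p] j p by simp
  then have "t ! j < t ! p" using j by simp
  moreover have "t ! l \<noteq> t ! p" using perm_distinct_nth[OF P, of l p] l p len by simp
  then have "t ! p < t ! l" using l by simp
  ultimately show False using av j l unfolding avoids123_def by blast
qed

lemma part2: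
  assumes P: "isperm t k" and ind: "indec t" and k2: "2 \<le> k" and p: "p < k"
    and lm: "ltrmin t p" and rm: "rtlmax t p"
  shows False
proof -
  have len: "length t = k" and dist: "distinct t" and st: "set t = {1..k}" using P by (auto simp: isperm_def)
  have S: "set (take p t) = {Suc (t ! p)..k}"
  proof
    show "set (take p t) \<subseteq> {Suc (t ! p)..k}"
    proof
      fix x assume "x \<in> set (take p t)"
      then obtain j where j: "j < p" "x = t ! j" using p len by (auto simp: set_take_nth)
      then have "t ! p < x" using lm unfolding ltrmin_def by simp
      moreover have "x \<le> k" using perm_vals[OF P, of j] j p by simp
      ultimately show "x \<in> {Suc (t ! p)..k}" by simp
    qed
  next
    show "{Suc (t ! p)..k} \<subseteq> set (take p t)"
    proof
      fix x assume x: "x \<in> {Suc (t ! p)..k}"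
      then have "x \<in> set t" using st by auto
      then obtain q where q: "q < k" "t ! q = x" using len by (auto simp: in_set_conv_nth)
      have "\<not> p < q" using rm q x len unfolding rtlmax_def by auto
      moreover have "q \<noteq> p" using q x by auto
      ultimately have "q < p" by simp
      then show "x \<in> set (take p t)" using q p len by (auto simp: set_take_nth)
    qed
  qed
  have "card (set (take p t)) = p" using dist p len by (simp add: distinct_card)
  then have cp: "k - t ! p = p" using S by simp
  have tp: "t ! p \<le> k" using perm_vals[OF P p] by simp
  show False
  proof (cases "p = 0")
    case True
    then have "t ! 0 = k" using cp tp by simp
    moreover have "set (take 1 t) = {t ! 0}" using len k2 by (cases t) auto
    ultimately have "set (take 1 t) = {length t - 1 + 1..length t}" using len k2 by simp
    then show False using ind k2 len unfolding indec_def by (metis less_le_trans one_less_numeral_iff semiring_norm(76) zero_less_one)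
  next
    case False
    have "Suc (t ! p) = length t - p + 1" using cp tp len by simp
    then have "set (take p t) = {length t - p + 1..length t}" using S len by simp
    then show False using ind False p len unfolding indec_def by auto
  qed
qed

lemma rc_len[simp]: "length (rc t) = length t" by (simp add: rc_def)

lemma rc_nth: "i < length t \<Longrightarrow> rc t ! i = Suc (length t) - t ! (length t - Suc i)"
  by (simp add: rc_def rev_nth)

lemma rc_perm: assumes P: "isperm t k" shows "isperm (rc t) k"
proof -
  have len: "length t = k" and dist: "distinct t" and st: "set t = {1..k}" using P by (auto simp: isperm_def)
  have inj: "inj_on (\<lambda>x. Suc k - x) {1..k}" by (auto simp: inj_on_def)
  have "distinct (rc t)" unfolding rc_def len using dist inj st by (simp add: distinct_map)
  moreover have "set (rc t) = {1..k}"
  proof -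
    have "(\<lambda>x. Suc k - x) ` {1..k} = {1..k}"
    proof
      show "(\<lambda>x. Suc k - x) ` {1..k} \<subseteq> {1..k}" by auto
      show "{1..k} \<subseteq> (\<lambda>x. Suc k - x) ` {1..k}"
      proof
        fix y assume "y \<in> {1..(k::nat)}"
        then have "y = Suc k - (Suc k - y)" "Suc k - y \<in> {1..k}" by auto
        then show "y \<in> (\<lambda>x. Suc k - x) ` {1..k}" by blast
      qed
    qed
    then show ?thesis unfolding rc_def len using st by simp
  qed
  ultimately show ?thesis using len by (simp add: isperm_def)
qed

lemma rc_ltrmin: assumes P: "isperm t k" and i: "i < k"
  shows "ltrmin (rc t) i \<longleftrightarrow> rtlmax t (k - Suc i)"
proof -
  have len: "length t = k" using P by (simp add: isperm_def)
  have rn: "rc t ! j = Suc k - t ! (k - Suc j)" if "j < k" for j using rc_nth[of j t] that len by simp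
  have lt: "(Suc k - t ! a < Suc k - t ! b) \<longleftrightarrow> t ! b < t ! a" if "a < k" "b < k" for a b
    using perm_vals[OF P that(1)] perm_vals[OF P that(2)] by auto
  show ?thesis
  proof
    assume L: "ltrmin (rc t) i"
    show "rtlmax t (k - Suc i)" unfolding rtlmax_def
    proof (intro allI impI)
      fix l assume l: "k - Suc i < l \<and> l < length t"
      define j where "j = k - Suc l"
      have j: "j < i" "k - Suc j = l" using l len i by (auto simp: j_def)
      have "rc t ! i < rc t ! j" using L j unfolding ltrmin_def by simp
      then show "t ! l < t ! (k - Suc i)" using rn[of i] rn[of j] lt[of "k - Suc i" l] j i l len by simp
    qed
  next
    assume R: "rtlmax t (k - Suc i)"
    show "ltrmin (rc t) i" unfolding ltrmin_def
    proof (intro allI impI)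
      fix j assume j: "j < i"
      have "t ! (k - Suc j) < t ! (k - Suc i)" using R j i len unfolding rtlmax_def by auto
      then show "rc t ! i < rc t ! j" using rn[of i] rn[of j] lt[of "k - Suc i" "k - Suc j"] j i by simp
    qed
  qed
qed

lemma SL:
  fixes S :: "nat set" and c :: nat
  assumes fin: "finite S" and le: "\<forall>x\<in>S. x \<le> c"
  shows "map (\<lambda>x. c - x) (rev (sorted_list_of_set S)) = sorted_list_of_set ((\<lambda>x. c - x) ` S)"
proof (rule sorted_distinct_set_unique)
  have s: "sorted_wrt (<) (sorted_list_of_set S)" by (simp add: strict_sorted_list_of_set)
  have "sorted_wrt (\<lambda>a b. c - b < c - a) (sorted_list_of_set S)"
  proof (rule sorted_wrt_mono_rel[OF _ s])
    fix x y assume "x \<in> set (sorted_list_of_set S)" "y \<in> set (sorted_list_of_set S)" "x < y"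
    then have "y \<le> c" "x < y" using fin le by auto
    then show "c - y < c - x" by arith
  qed
  then have "sorted_wrt (<) (map (\<lambda>x. c - x) (rev (sorted_list_of_set S)))"
    by (simp add: sorted_wrt_map sorted_wrt_rev)
  then show "sorted (map (\<lambda>x. c - x) (rev (sorted_list_of_set S)))"
    and "distinct (map (\<lambda>x. c - x) (rev (sorted_list_of_set S)))"
    by (simp_all add: strict_sorted_iff)
  show "sorted (sorted_list_of_set ((\<lambda>x. c - x) ` S))" by simp
  show "distinct (sorted_list_of_set ((\<lambda>x. c - x) ` S))" by simp
  show "set (map (\<lambda>x. c - x) (rev (sorted_list_of_set S))) = set (sorted_list_of_set ((\<lambda>x. c - x) ` S))"
    using fin by simp
qed

lemma sorted_self: "sorted_wrt (<) xs \<Longrightarrow> sorted_list_of_set (set xs) = xs"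
  by (rule sorted_distinct_set_unique) (simp_all add: strict_sorted_iff)

definition LM :: "nat list \<Rightarrow> nat \<Rightarrow> nat set" where
  "LM t k = {t ! p | p. p < k \<and> ltrmin t p}"

lemma lam_eq: "isperm t k \<Longrightarrow> lam t = lam_aux (Suc k) t"
  by (simp add: lam_def isperm_def)

lemma SA_lam: assumes P: "isperm t k"
  shows "set (codeA (lam t)) = (\<lambda>v. Suc k - v) ` (LM t k - {1})"
proof -
  have len: "length t = k" using P by (simp add: isperm_def)
  have "set (codeA (lam t)) = {Suc k - fm (Suc k) (take i t) | i. 0 < i \<and> i < k \<and> t!i < fm (Suc k) (take i t)}"
    using codes_lam[of "Suc k" t] lam_eq[OF P] len by simp
  also have "\<dots> = (\<lambda>v. Suc k - v) ` {fm (Suc k) (take i t) | i. 0 < i \<and> i < k \<and> t!i < fm (Suc k) (take i t)}"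
    by blast
  also have "\<dots> = (\<lambda>v. Suc k - v) ` (LM t k - {1})" unfolding R1[OF P] LM_def ..
  finally show ?thesis .
qed

lemma SD_lam: assumes P: "isperm t k"
  shows "set (codeD (lam t)) = {i. 0 < i \<and> i < k \<and> ltrmin t i}"
proof -
  have len: "length t = k" and dist: "distinct t" using P by (simp_all add: isperm_def)
  have "set (codeD (lam t)) = {i. 0 < i \<and> i < k \<and> t!i < fm (Suc k) (take i t)}"
    using codes_lam[of "Suc k" t] lam_eq[OF P] len by simp
  also have "\<dots> = {i. 0 < i \<and> i < k \<and> ltrmin t i}"
    using ltr_iff[OF dist perm_lt[OF P]] len by auto
  finally show ?thesis .
qed

lemma fm_perm: assumes P: "isperm t k" "1 \<le> k" shows "fm (Suc k) t = 1"
proof -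
  have len: "length t = k" and st: "set t = {1..k}" using P by (simp_all add: isperm_def)
  have "fm (Suc k) (take k t) = Min (set (take k t))"
    using fm_take[OF perm_lt[OF P(1)], of k] P(2) len by simp
  moreover have "Min {1..k} = (1::nat)" using P(2) by (intro Min_eqI) auto
  ultimately show ?thesis using len st P(2) by simp
qed

lemma cnt_lam_perm: assumes P: "isperm t k" "1 \<le> k"
  shows "cnt U (lam t) = k" "cnt D (lam t) = k" "length (lam t) = 2 * k"
  using cnt_lam[of "Suc k" t] fm_perm[OF P] lam_eq[OF P(1)] length_lam[of "Suc k" t] P
  by (simp_all add: isperm_def)

lemma LM_one: assumes P: "isperm t k" "1 \<le> k" shows "1 \<in> LM t k"
proof -
  have len: "length t = k" and st: "set t = {1..k}" using P by (simp_all add: isperm_def)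
  have "1 \<in> set t" using st P(2) by simp
  then obtain q where q: "q < k" "t ! q = 1" using len by (auto simp: in_set_conv_nth)
  have "ltrmin t q" unfolding ltrmin_def
  proof (intro allI impI)
    fix j assume "j < q"
    then have "t ! j \<noteq> 1" "1 \<le> t ! j" using perm_distinct_nth[OF P(1), of j q] q perm_vals[OF P(1), of j] by auto
    then show "t ! q < t ! j" using q by simp
  qed
  then have "\<exists>p. 1 = t ! p \<and> p < k \<and> ltrmin t p" using q by (intro exI[of _ q]) simp
  then show ?thesis unfolding LM_def by simp
qed

lemma LM_sub: "isperm t k \<Longrightarrow> LM t k \<subseteq> {1..k}"
proof
  fix v assume "isperm t k" "v \<in> LM t k"
  then obtain p where "p < k" "v = t ! p" unfolding LM_def by blast
  then show "v \<in> {1..k}" using perm_vals[OF \<open>isperm t k\<close> \<open>p < k\<close>] by simp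
qed

lemma RV_eq: assumes P: "isperm t k" and av: "avoids123 t" and ind: "indec t" and k2: "2 \<le> k"
  shows "{t ! p | p. p < k \<and> rtlmax t p} = {1..k} - LM t k"
proof
  show "{t ! p | p. p < k \<and> rtlmax t p} \<subseteq> {1..k} - LM t k"
  proof
    fix v assume "v \<in> {t ! p | p. p < k \<and> rtlmax t p}"
    then obtain p where p: "p < k" "rtlmax t p" "v = t ! p" by blast
    have "v \<notin> LM t k"
    proof
      assume "v \<in> LM t k"
      then obtain p' where p': "p' < k" "ltrmin t p'" "v = t ! p'" unfolding LM_def by blast
      have "t ! p' = t ! p" using p p' by simp
      then have "p' = p" using perm_distinct_nth[OF P p'(1) p(1)] by simp
      then have "ltrmin t p" using p'(2) by simp
      then show False using part2[OF P ind k2 p(1)] p(2) by simp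
    qed
    then show "v \<in> {1..k} - LM t k" using perm_vals[OF P p(1)] p by simp
  qed
next
  show "{1..k} - LM t k \<subseteq> {t ! p | p. p < k \<and> rtlmax t p}"
  proof
    fix v assume v: "v \<in> {1..k} - LM t k"
    have len: "length t = k" and st: "set t = {1..k}" using P by (simp_all add: isperm_def)
    have "v \<in> set t" using v st by simp
    then obtain p where p: "p < k" "t ! p = v" using len by (auto simp: in_set_conv_nth)
    have "\<not> ltrmin t p"
    proof
      assume "ltrmin t p"
      then have "\<exists>p'. v = t ! p' \<and> p' < k \<and> ltrmin t p'" using p by (intro exI[of _ p]) simp
      then have "v \<in> LM t k" unfolding LM_def by simp
      then show False using v by simp
    qed
    then have "rtlmax t p" using part1[OF P av p(1)] by simp
    then have "\<exists>p'. v = t ! p' \<and> p' < k \<and> rtlmax t p'" using p by (intro exI[of _ p]) simp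
    then show "v \<in> {t ! p | p. p < k \<and> rtlmax t p}" by simp
  qed
qed

lemma LM_rc: assumes P: "isperm t k"
  shows "LM (rc t) k = (\<lambda>v. Suc k - v) ` {t ! p | p. p < k \<and> rtlmax t p}"
proof -
  have len: "length t = k" using P by (simp add: isperm_def)
  show ?thesis
  proof
    show "LM (rc t) k \<subseteq> (\<lambda>v. Suc k - v) ` {t ! p | p. p < k \<and> rtlmax t p}"
    proof
      fix v assume "v \<in> LM (rc t) k"
      then obtain i where i: "i < k" "ltrmin (rc t) i" "v = rc t ! i" unfolding LM_def by blast
      have "rtlmax t (k - Suc i)" using rc_ltrmin[OF P i(1)] i by simp
      moreover have "v = Suc k - t ! (k - Suc i)" using rc_nth[of i t] i len by simp
      moreover have "k - Suc i < k" using i by simp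
      ultimately show "v \<in> (\<lambda>v. Suc k - v) ` {t ! p | p. p < k \<and> rtlmax t p}" by blast
    qed
  next
    show "(\<lambda>v. Suc k - v) ` {t ! p | p. p < k \<and> rtlmax t p} \<subseteq> LM (rc t) k"
    proof
      fix v assume "v \<in> (\<lambda>v. Suc k - v) ` {t ! p | p. p < k \<and> rtlmax t p}"
      then obtain p where p: "p < k" "rtlmax t p" "v = Suc k - t ! p" by blast
      define i where "i = k - Suc p"
      have i: "i < k" "k - Suc i = p" using p by (auto simp: i_def)
      have "ltrmin (rc t) i" using rc_ltrmin[OF P i(1)] i p by simp
      moreover have "v = rc t ! i" using rc_nth[of i t] i len p by simp
      ultimately show "v \<in> LM (rc t) k" using i unfolding LM_def by blast
    qed
  qed
qed

lemma flip2: fixes k :: nat assumes "X \<subseteq> {1..k}"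
  shows "(\<lambda>v. Suc k - v) ` ((\<lambda>v. Suc k - v) ` X - {1}) = X - {k}"
proof
  show "(\<lambda>v. Suc k - v) ` ((\<lambda>v. Suc k - v) ` X - {1}) \<subseteq> X - {k}"
  proof
    fix y assume "y \<in> (\<lambda>v. Suc k - v) ` ((\<lambda>v. Suc k - v) ` X - {1})"
    then obtain v where v: "v \<in> X" "Suc k - v \<noteq> 1" "y = Suc k - (Suc k - v)" by blast
    have "1 \<le> v" "v \<le> k" using v(1) assms by auto
    then show "y \<in> X - {k}" using v by simp
  qed
next
  show "X - {k} \<subseteq> (\<lambda>v. Suc k - v) ` ((\<lambda>v. Suc k - v) ` X - {1})"
  proof
    fix y assume y: "y \<in> X - {k}"
    have "1 \<le> y" "y \<le> k" using y assms by auto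
    then have "Suc k - y \<in> (\<lambda>v. Suc k - v) ` X - {1}" "y = Suc k - (Suc k - y)" using y by auto
    then show "y \<in> (\<lambda>v. Suc k - v) ` ((\<lambda>v. Suc k - v) ` X - {1})" by blast
  qed
qed

lemma flip3: fixes k :: nat assumes "V \<subseteq> {1..k}"
  shows "(\<lambda>x. k - x) ` ({1..k-2} - (\<lambda>v. k - v) ` (V - {1})) = {2..k-1} - V"
proof
  show "(\<lambda>x. k - x) ` ({1..k-2} - (\<lambda>v. k - v) ` (V - {1})) \<subseteq> {2..k-1} - V"
  proof
    fix y assume "y \<in> (\<lambda>x. k - x) ` ({1..k-2} - (\<lambda>v. k - v) ` (V - {1}))"
    then obtain x where x: "1 \<le> x" "x \<le> k - 2" "x \<notin> (\<lambda>v. k - v) ` (V - {1})" "y = k - x" by auto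
    have y: "2 \<le> y" "y \<le> k - 1" using x by auto
    have "y \<notin> V"
    proof
      assume "y \<in> V"
      then have "k - y \<in> (\<lambda>v. k - v) ` (V - {1})" using y by auto
      moreover have "k - y = x" using x by auto
      ultimately show False using x by simp
    qed
    then show "y \<in> {2..k-1} - V" using y by simp
  qed
next
  show "{2..k-1} - V \<subseteq> (\<lambda>x. k - x) ` ({1..k-2} - (\<lambda>v. k - v) ` (V - {1}))"
  proof
    fix y assume y: "y \<in> {2..k-1} - V"
    have nimg: "k - y \<notin> (\<lambda>v. k - v) ` (V - {1})"
    proof
      assume "k - y \<in> (\<lambda>v. k - v) ` (V - {1})"
      then obtain v where v: "v \<in> V" "k - y = k - v" by blast
      have "v \<le> k" using v assms by auto
      then have "v = y" using v y by auto
      then show False using v y by simp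
    qed
    have "k - y \<in> {1..k-2}" "y = k - (k - y)" using y by auto
    then show "y \<in> (\<lambda>x. k - x) ` ({1..k-2} - (\<lambda>v. k - v) ` (V - {1}))" using nimg by blast
  qed
qed

lemma setA_goal:
  assumes P: "isperm t k" and av: "avoids123 t" and ind: "indec t" and k2: "2 \<le> k"
  shows "(\<lambda>x. k - x) ` ({1..k-2} - (\<lambda>a. a - 1) ` set (codeA (lam t))) = set (codeA (lam (rc t)))"
proof -
  have k1: "1 \<le> k" using k2 by simp
  have Vs: "LM t k \<subseteq> {1..k}" by (rule LM_sub[OF P])
  have "(\<lambda>a. a - 1) ` set (codeA (lam t)) = (\<lambda>v. k - v) ` (LM t k - {1})"
    unfolding SA_lam[OF P] image_image by simp
  then have L: "(\<lambda>x. k - x) ` ({1..k-2} - (\<lambda>a. a - 1) ` set (codeA (lam t))) = {2..k-1} - LM t k"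
    using flip3[OF Vs] by simp
  have RVs: "{t ! p | p. p < k \<and> rtlmax t p} \<subseteq> {1..k}" unfolding RV_eq[OF P av ind k2] by blast
  have "set (codeA (lam (rc t))) = {t ! p | p. p < k \<and> rtlmax t p} - {k}"
    unfolding SA_lam[OF rc_perm[OF P]] LM_rc[OF P] flip2[OF RVs] ..
  also have "\<dots> = {2..k-1} - LM t k"
    unfolding RV_eq[OF P av ind k2]
  proof (rule set_eqI)
    fix x
    show "x \<in> {1..k} - LM t k - {k} \<longleftrightarrow> x \<in> {2..k-1} - LM t k"
    proof (cases "x = 1")
      case True then show ?thesis using LM_one[OF P k1] by simp
    next
      case False then show ?thesis using k2 by auto
    qed
  qed
  finally show ?thesis using L by simp
qed

lemma setD_goal:
  assumes P: "isperm t k" and av: "avoids123 t" and ind: "indec t" and k2: "2 \<le> k"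
  shows "(\<lambda>x. k - 1 - x) ` ({1..k-2} - set (codeD (lam t))) = set (codeD (lam (rc t)))"
proof -
  have rl: "rtlmax t p \<longleftrightarrow> \<not> ltrmin t p" if "p < k" for p
    using part1[OF P av that] part2[OF P ind k2 that] by auto
  have l0: "ltrmin t 0" by (simp add: ltrmin_def)
  have R: "set (codeD (lam (rc t))) = {y. 1 \<le> y \<and> y \<le> k - 2 \<and> \<not> ltrmin t (k - Suc y)}"
  proof -
    have "set (codeD (lam (rc t))) = {i. 0 < i \<and> i < k \<and> ltrmin (rc t) i}"
      by (rule SD_lam[OF rc_perm[OF P]])
    also have "\<dots> = {i. 0 < i \<and> i < k \<and> \<not> ltrmin t (k - Suc i)}"
      using rc_ltrmin[OF P] rl by auto
    also have "\<dots> = {y. 1 \<le> y \<and> y \<le> k - 2 \<and> \<not> ltrmin t (k - Suc y)}"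
    proof (intro Collect_cong iffI)
      fix y assume y: "0 < y \<and> y < k \<and> \<not> ltrmin t (k - Suc y)"
      have "y \<noteq> k - 1"
      proof
        assume "y = k - 1"
        then have "k - Suc y = 0" using y by simp
        then show False using y l0 by simp
      qed
      then show "1 \<le> y \<and> y \<le> k - 2 \<and> \<not> ltrmin t (k - Suc y)" using y by auto
    next
      fix y assume "1 \<le> y \<and> y \<le> k - 2 \<and> \<not> ltrmin t (k - Suc y)"
      then show "0 < y \<and> y < k \<and> \<not> ltrmin t (k - Suc y)" using k2 by auto
    qed
    finally show ?thesis .
  qed
  show ?thesis unfolding R SD_lam[OF P]
  proof
    show "(\<lambda>x. k - 1 - x) ` ({1..k - 2} - {i. 0 < i \<and> i < k \<and> ltrmin t i})
      \<subseteq> {y. 1 \<le> y \<and> y \<le> k - 2 \<and> \<not> ltrmin t (k - Suc y)}"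
    proof
      fix y assume "y \<in> (\<lambda>x. k - 1 - x) ` ({1..k - 2} - {i. 0 < i \<and> i < k \<and> ltrmin t i})"
      then obtain x where x0: "x \<in> {1..k-2}" "x \<notin> {i. 0 < i \<and> i < k \<and> ltrmin t i}" "y = k - 1 - x" by blast
      then have x: "1 \<le> x" "x \<le> k - 2" "\<not> ltrmin t x" "y = k - 1 - x" using k2 by auto
      have "k - Suc y = x" using x by auto
      then show "y \<in> {y. 1 \<le> y \<and> y \<le> k - 2 \<and> \<not> ltrmin t (k - Suc y)}" using x by auto
    qed
  next
    show "{y. 1 \<le> y \<and> y \<le> k - 2 \<and> \<not> ltrmin t (k - Suc y)}
      \<subseteq> (\<lambda>x. k - 1 - x) ` ({1..k - 2} - {i. 0 < i \<and> i < k \<and> ltrmin t i})"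
    proof
      fix y assume y: "y \<in> {y. 1 \<le> y \<and> y \<le> k - 2 \<and> \<not> ltrmin t (k - Suc y)}"
      then have "k - Suc y \<in> {1..k - 2} - {i. 0 < i \<and> i < k \<and> ltrmin t i}" "y = k - 1 - (k - Suc y)"
        by auto
      then show "y \<in> (\<lambda>x. k - 1 - x) ` ({1..k - 2} - {i. 0 < i \<and> i < k \<and> ltrmin t i})" by blast
    qed
  qed
qed

lemma core:
  assumes P: "isperm t k" and av: "avoids123 t" and ind: "indec t" and k1: "1 \<le> k"
  shows "Lirr (lam t) = lam (rc t)"
proof (cases "k = 1")
  case True
  have len: "length t = 1" and st: "set t = {1}" using P True by (auto simp: isperm_def)
  then obtain x where "t = [x]" by (metis One_nat_def length_0_conv length_Suc_conv)
  then have t: "t = [1]" using st by simp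
  show ?thesis unfolding t
    by (simp add: lam_def rc_def Lirr_def codeA_def codeD_def valleys_def path_of_code_def)
next
  case False
  then have k2: "2 \<le> k" using k1 by simp
  define Q where "Q = lam (rc t)"
  have Pr: "isperm (rc t) k" by (rule rc_perm[OF P])
  have n: "length (lam t) div 2 = k" using cnt_lam_perm[OF P k1] by simp
  define SAh where "SAh = {1..k-2} - (\<lambda>a. a - 1) ` set (codeA (lam t))"
  define SDh where "SDh = {1..k-2} - set (codeD (lam t))"
  have A: "map (\<lambda>x. k - x) (rev (sorted_list_of_set SAh)) = codeA Q"
  proof -
    have "map (\<lambda>x. k - x) (rev (sorted_list_of_set SAh)) = sorted_list_of_set ((\<lambda>x. k - x) ` SAh)"
      by (rule SL) (auto simp: SAh_def)
    also have "\<dots> = sorted_list_of_set (set (codeA Q))"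
      unfolding SAh_def Q_def setA_goal[OF P av ind k2] ..
    also have "\<dots> = codeA Q" by (rule sorted_self[OF codeA_sorted])
    finally show ?thesis .
  qed
  have Dd: "map (\<lambda>x. k - 1 - x) (rev (sorted_list_of_set SDh)) = codeD Q"
  proof -
    have "map (\<lambda>x. k - 1 - x) (rev (sorted_list_of_set SDh)) = sorted_list_of_set ((\<lambda>x. k - 1 - x) ` SDh)"
      by (rule SL) (auto simp: SDh_def)
    also have "\<dots> = sorted_list_of_set (set (codeD Q))"
      unfolding SDh_def Q_def setD_goal[OF P av ind k2] ..
    also have "\<dots> = codeD Q" by (rule sorted_self[OF codeD_sorted])
    finally show ?thesis .
  qed
  have "Lirr (lam t) = path_of_code k (map (\<lambda>x. k - x) (rev (sorted_list_of_set SAh)))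
                          (map (\<lambda>x. k - 1 - x) (rev (sorted_list_of_set SDh)))"
    unfolding Lirr_def Let_def n SAh_def SDh_def ..
  also have "\<dots> = path_of_code k (codeA Q) (codeD Q)" unfolding A Dd ..
  also have "\<dots> = Q"
  proof (rule path_of_code_codes)
    have lr: "length (rc t) = k" using Pr by (simp add: isperm_def)
    have ne: "rc t \<noteq> []" using lr k1 by (cases "rc t") auto
    show "Q \<noteq> []" unfolding Q_def lam_eq[OF Pr] lam_aux_Nil_iff by (rule ne)
    show "last Q = D" unfolding Q_def lam_eq[OF Pr] by (rule last_lam[OF ne])
    show "cnt U Q = k" "cnt D Q = k" unfolding Q_def using cnt_lam_perm[OF Pr k1] by simp_all
  qed
  finally show ?thesis unfolding Q_def .
qed

lemma distinct_singleton: "distinct xs \<Longrightarrow> set xs = {a} \<Longrightarrow> xs = [a]"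
proof -
  assume d: "distinct xs" and s: "set xs = {a}"
  then have "length xs = 1" using distinct_card[OF d] by simp
  then show ?thesis using s by (cases xs) auto
qed

lemma returns_indec:
  assumes P: "isperm t k" and ind: "indec t" and k1: "1 \<le> k"
  shows "returns (lam t) = [length (lam t)]"
proof -
  have len: "length t = k" and dist: "distinct t" and st: "set t = {1..k}" using P by (auto simp: isperm_def)
  have S: "set (returns (lam t)) = {length (lam_aux (Suc k) (take i t)) | i. 0 < i \<and> i \<le> k \<and>
       0 + int (Suc k) - int (fm (Suc k) (take i t)) - int i = 0}"
    unfolding returns_H lam_eq[OF P] returns_lam len ..
  have no: "\<not> (int (Suc k) - int (fm (Suc k) (take i t)) - int i = 0)" if i: "0 < i" "i < k" for i
  proof
    assume eq: "int (Suc k) - int (fm (Suc k) (take i t)) - int i = 0"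
    define m where "m = Min (set (take i t))"
    have fmm: "fm (Suc k) (take i t) = m" unfolding m_def using fm_take[OF perm_lt[OF P], of i] i len by simp
    have mk: "m = k - i + 1" using eq fmm i by simp
    have sub: "set (take i t) \<subseteq> {m..k}"
    proof
      fix x assume x: "x \<in> set (take i t)"
      then have "m \<le> x" unfolding m_def by simp
      moreover have "x \<in> set t" using x by (rule in_set_takeD)
      ultimately show "x \<in> {m..k}" using st by auto
    qed
    have "card (set (take i t)) = i" using dist i len by (simp add: distinct_card)
    moreover have "card {m..k} = i" using mk i by simp
    ultimately have "set (take i t) = {m..k}" using card_subset_eq[OF _ sub] by simp
    then have "set (take i t) = {length t - i + 1..length t}" using mk len by simp
    then show False using ind i len unfolding indec_def by blast
  qed
  have S2: "set (returns (lam t)) = {length (lam t)}"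
  proof -
    have "{length (lam_aux (Suc k) (take i t)) | i. 0 < i \<and> i \<le> k \<and>
       0 + int (Suc k) - int (fm (Suc k) (take i t)) - int i = 0} = {length (lam_aux (Suc k) (take k t))}"
    proof
      show "{length (lam_aux (Suc k) (take i t)) | i. 0 < i \<and> i \<le> k \<and>
       0 + int (Suc k) - int (fm (Suc k) (take i t)) - int i = 0} \<subseteq> {length (lam_aux (Suc k) (take k t))}"
      proof
        fix v assume "v \<in> {length (lam_aux (Suc k) (take i t)) | i. 0 < i \<and> i \<le> k \<and>
          0 + int (Suc k) - int (fm (Suc k) (take i t)) - int i = 0}"
        then obtain i where i: "v = length (lam_aux (Suc k) (take i t))" "0 < i" "i \<le> k"
          "int (Suc k) - int (fm (Suc k) (take i t)) - int i = 0" by auto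
        have "i = k" using no[of i] i by (cases "i < k") auto
        then show "v \<in> {length (lam_aux (Suc k) (take k t))}" using i by simp
      qed
    next
      have "fm (Suc k) (take k t) = 1" using fm_perm[OF P k1] len by simp
      then have "0 < k \<and> k \<le> k \<and> 0 + int (Suc k) - int (fm (Suc k) (take k t)) - int k = 0" using k1 by simp
      then show "{length (lam_aux (Suc k) (take k t))} \<subseteq> {length (lam_aux (Suc k) (take i t)) | i. 0 < i \<and> i \<le> k \<and>
       0 + int (Suc k) - int (fm (Suc k) (take i t)) - int i = 0}" by blast
    qed
    then show ?thesis unfolding S using len lam_eq[OF P] by simp
  qed
  have "distinct (returns (lam t))" unfolding returns_def by (simp add: distinct_map)
  then show ?thesis using S2 by (rule distinct_singleton)
qed

lemma fm_shift: "fm (m + c) (map (\<lambda>x. x + c) xs) = fm m xs + c"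
  by (induction xs arbitrary: m) (auto simp: min_def)

lemma avoid_drop: assumes "avoids123 s" shows "avoids123 (drop k s)"
  unfolding avoids123_def
proof (intro notI, elim exE conjE)
  fix i j l assume h: "i < j" "j < l" "l < length (drop k s)" "drop k s ! i < drop k s ! j" "drop k s ! j < drop k s ! l"
  then have "k+i < k+j" "k+j < k+l" "k+l < length s" "s!(k+i) < s!(k+j)" "s!(k+j) < s!(k+l)" by auto
  then show False using assms unfolding avoids123_def by blast
qed

lemma mem_take: "i < k \<Longrightarrow> i < length s \<Longrightarrow> s ! i \<in> set (take k s)"
  using nth_mem[of i "take k s"] by simp

lemma avoid_take_shift:
  assumes "avoids123 s" "\<forall>x\<in>set (take k s). c < x"
  shows "avoids123 (map (\<lambda>x. x - c) (take k s))"
  unfolding avoids123_def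
proof (intro notI, elim exE conjE)
  fix i j l assume h: "i < j" "j < l" "l < length (map (\<lambda>x. x - c) (take k s))"
    "map (\<lambda>x. x - c) (take k s) ! i < map (\<lambda>x. x - c) (take k s) ! j"
    "map (\<lambda>x. x - c) (take k s) ! j < map (\<lambda>x. x - c) (take k s) ! l"
  then have b: "l < length s" "l < k" by auto
  have lt1: "s ! i - c < s ! j - c" and lt2: "s ! j - c < s ! l - c" using h b by auto
  have "s ! i \<in> set (take k s)" "s ! j \<in> set (take k s)" "s ! l \<in> set (take k s)"
    using h(1,2) b by (simp_all add: mem_take)
  then have "c < s ! i" "c < s ! j" "c < s ! l" using assms(2) by auto
  then have "s ! i < s ! j" "s ! j < s ! l" using lt1 lt2 by auto
  then show False using assms(1) h(1,2) b unfolding avoids123_def by blast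
qed


lemma image_minus_c: "(\<lambda>x::nat. x - c) ` {Suc c..n} = {1..n - c}"
proof
  show "(\<lambda>x. x - c) ` {Suc c..n} \<subseteq> {1..n - c}" by auto
  show "{1..n - c} \<subseteq> (\<lambda>x. x - c) ` {Suc c..n}"
  proof
    fix y assume y: "y \<in> {1..n - c}"
    then have "y + c \<in> {Suc c..n}" "y = (y + c) - c" by auto
    then show "y \<in> (\<lambda>x. x - c) ` {Suc c..n}" by blast
  qed
qed

lemma image_plus_c: "(\<lambda>x::nat. x + c) ` {a..b} = {a + c..b + c}"
proof
  show "(\<lambda>x. x + c) ` {a..b} \<subseteq> {a + c..b + c}" by auto
  show "{a + c..b + c} \<subseteq> (\<lambda>x. x + c) ` {a..b}"
  proof
    fix y assume y: "y \<in> {a + c..b + c}"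
    then have "y - c \<in> {a..b}" "y = (y - c) + c" by auto
    then show "y \<in> (\<lambda>x. x + c) ` {a..b}" by blast
  qed
qed

lemma main:
  "isperm s n \<Longrightarrow> avoids123 s \<Longrightarrow> lam (rc s) = Lprime (lam s)"
proof (induction n arbitrary: s rule: less_induct)
  case (less n s)
  have len: "length s = n" and dist: "distinct s" and st: "set s = {1..n}" using less.prems by (auto simp: isperm_def)
  show ?case
  proof (cases "n = 0")
    case True
    then have "s = []" using len by simp
    then show ?thesis by (simp add: lam_def rc_def Lprime_def components_Nil)
  next
    case False
    define Pk where "Pk = (\<lambda>k. 0 < k \<and> k \<le> n \<and> set (take k s) = {n - k + 1..n})"
    have Pn: "Pk n" unfolding Pk_def using False len st by simp
    define k where "k = (LEAST k. Pk k)"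
    have Pkk: "Pk k" unfolding k_def by (rule LeastI[of Pk n, OF Pn])
    have k: "0 < k" "k \<le> n" "set (take k s) = {n - k + 1..n}" using Pkk unfolding Pk_def by auto
    have kmin: "set (take j s) \<noteq> {n - j + 1..n}" if "0 < j" "j < k" for j
    proof
      assume "set (take j s) = {n - j + 1..n}"
      then have "Pk j" unfolding Pk_def using that k by simp
      then have "k \<le> j" unfolding k_def by (rule Least_le)
      then show False using that by simp
    qed
    define c where "c = n - k"
    have nkc: "n = k + c" using k by (simp add: c_def)
    define \<tau> where "\<tau> = take k s"
    define \<rho> where "\<rho> = drop k s"
    have s_eq: "s = \<tau> @ \<rho>" by (simp add: \<tau>_def \<rho>_def)
    have tset: "set \<tau> = {Suc c..n}" using k(3) nkc by (simp add: \<tau>_def)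
    have tgt: "\<forall>x\<in>set \<tau>. c < x" using tset by auto
    define \<tau>0 where "\<tau>0 = map (\<lambda>x. x - c) \<tau>"
    have teq: "\<tau> = map (\<lambda>x. x + c) \<tau>0"
      unfolding \<tau>0_def map_map o_def by (rule map_idI[symmetric]) (use tgt in auto)
    have lt: "length \<tau> = k" using k len by (simp add: \<tau>_def)
    have P0: "isperm \<tau>0 k"
    proof -
      have "distinct \<tau>" using dist by (simp add: \<tau>_def)
      moreover have "inj_on (\<lambda>x. x - c) (set \<tau>)" using tgt by (auto simp: inj_on_def)
      ultimately have "distinct \<tau>0" by (simp add: \<tau>0_def distinct_map)
      moreover have "set \<tau>0 = {1..k}" unfolding \<tau>0_def set_map tset image_minus_c using nkc by simp
      moreover have "length \<tau>0 = k" using lt by (simp add: \<tau>0_def)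
      ultimately show ?thesis by (simp add: isperm_def)
    qed
    have av0: "avoids123 \<tau>0" unfolding \<tau>0_def \<tau>_def
      by (rule avoid_take_shift[OF less.prems(2)]) (use tgt in \<open>simp add: \<tau>_def\<close>)
    have ind0: "indec \<tau>0" unfolding indec_def
    proof (intro allI impI)
      fix j assume j: "0 < j \<and> j < length \<tau>0"
      have l0: "length \<tau>0 = k" using P0 by (simp add: isperm_def)
      show "set (take j \<tau>0) \<noteq> {length \<tau>0 - j + 1..length \<tau>0}"
      proof
        assume h: "set (take j \<tau>0) = {length \<tau>0 - j + 1..length \<tau>0}"
        have "set (take j \<tau>) = (\<lambda>x. x + c) ` set (take j \<tau>0)" unfolding teq by (simp add: take_map)
        also have "\<dots> = {k - j + 1 + c..k + c}" unfolding h l0 image_plus_c ..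
        also have "\<dots> = {n - j + 1..n}" using nkc j l0 by simp
        finally have "set (take j s) = {n - j + 1..n}" using j l0 by (simp add: \<tau>_def)
        then show False using kmin[of j] j l0 by simp
      qed
    qed
    have Pr: "isperm \<rho> c"
    proof -
      have d: "distinct \<rho>" using dist by (simp add: \<rho>_def)
      have "distinct (\<tau> @ \<rho>)" using dist s_eq by simp
      then have disj: "set \<tau> \<inter> set \<rho> = {}" by simp
      have un: "set \<tau> \<union> set \<rho> = {1..n}" using st s_eq by simp
      have "set \<rho> = {1..c}"
      proof (rule set_eqI)
        fix x show "x \<in> set \<rho> \<longleftrightarrow> x \<in> {1..c}"
        proof
          assume x: "x \<in> set \<rho>"
          then have "x \<in> {1..n}" "x \<notin> set \<tau>" using disj un by auto
          then show "x \<in> {1..c}" using tset by auto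
        next
          assume x: "x \<in> {1..c}"
          then have "x \<in> {1..n}" "x \<notin> set \<tau>" using tset nkc by auto
          then show "x \<in> set \<rho>" using un by auto
        qed
      qed
      moreover have "length \<rho> = c" using len k by (simp add: \<rho>_def c_def)
      ultimately show ?thesis using d by (simp add: isperm_def)
    qed
    have avr: "avoids123 \<rho>" unfolding \<rho>_def by (rule avoid_drop[OF less.prems(2)])
    have IH: "lam (rc \<rho>) = Lprime (lam \<rho>)" using less.IH[of c \<rho>] Pr avr k nkc by simp
    have k1: "1 \<le> k" using k by simp
    have core0: "Lirr (lam \<tau>0) = lam (rc \<tau>0)" by (rule core[OF P0 av0 ind0 k1])
    have lams: "lam s = lam \<tau>0 @ lam \<rho>"
    proof -
      have "lam s = lam_aux (Suc n) \<tau> @ lam_aux (fm (Suc n) \<tau>) \<rho>"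
        using len unfolding lam_def s_eq lam_aux_append by simp
      moreover have "lam_aux (Suc n) \<tau> = lam \<tau>0"
        unfolding teq lam_eq[OF P0] nkc using lam_aux_shift[of "Suc k" c \<tau>0] by simp
      moreover have "fm (Suc n) \<tau> = Suc c"
        unfolding teq nkc using fm_shift[of "Suc k" c \<tau>0] fm_perm[OF P0 k1] by simp
      ultimately show ?thesis using lam_eq[OF Pr] by simp
    qed
    have lamrc: "lam (rc s) = lam (rc \<rho>) @ lam (rc \<tau>0)"
    proof -
      have rt: "map (\<lambda>x. Suc n - x) (rev \<tau>) = rc \<tau>0"
        unfolding teq rc_def rev_map map_map o_def using nkc P0 by (simp add: isperm_def)
      have rr: "map (\<lambda>x. Suc n - x) (rev \<rho>) = map (\<lambda>x. x + k) (rc \<rho>)"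
      proof -
        have "\<forall>x\<in>set \<rho>. x \<le> c" using Pr by (auto simp: isperm_def)
        then have "map (\<lambda>x. Suc n - x) (rev \<rho>) = map (\<lambda>x. (Suc c - x) + k) (rev \<rho>)"
          using nkc by (intro map_cong) auto
        then show ?thesis using Pr by (simp add: rc_def map_map o_def isperm_def)
      qed
      have "rc s = map (\<lambda>x. Suc n - x) (rev \<rho>) @ map (\<lambda>x. Suc n - x) (rev \<tau>)"
        using len by (simp add: rc_def s_eq)
      then have rcs: "rc s = map (\<lambda>x. x + k) (rc \<rho>) @ rc \<tau>0" unfolding rr rt .
      have lrc: "length (rc s) = n" using len by simp
      have "lam (rc s) = lam_aux (Suc n) (map (\<lambda>x. x + k) (rc \<rho>)) @
                         lam_aux (fm (Suc n) (map (\<lambda>x. x + k) (rc \<rho>))) (rc \<tau>0)"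
        using lrc unfolding lam_def unfolding rcs lam_aux_append by simp
      moreover have "lam_aux (Suc n) (map (\<lambda>x. x + k) (rc \<rho>)) = lam (rc \<rho>)"
        using lam_aux_shift[of "Suc c" k "rc \<rho>"] lam_eq[OF rc_perm[OF Pr]] nkc by (simp add: add.commute)
      moreover have "fm (Suc n) (map (\<lambda>x. x + k) (rc \<rho>)) = Suc k"
      proof (cases "c = 0")
        case True
        then have "rc \<rho> = []" using Pr by (simp add: isperm_def rc_def)
        then show ?thesis using nkc True by simp
      next
        case False
        then have "fm (Suc c) (rc \<rho>) = 1" using fm_perm[OF rc_perm[OF Pr]] by simp
        then show ?thesis using fm_shift[of "Suc c" k "rc \<rho>"] nkc by (simp add: add.commute)
      qed
      ultimately show ?thesis using lam_eq[OF rc_perm[OF P0]] by simp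
    qed
    have "Lprime (lam s) = Lprime (lam \<rho>) @ Lirr (lam \<tau>0)"
      unfolding lams by (rule Lprime_app[OF returns_indec[OF P0 ind0 k1]]) (use cnt_lam_perm[OF P0 k1] in simp)
    then show ?thesis using lamrc IH core0 by simp
  qed
qed

theorem theorem6:
  fixes n :: nat and \<sigma> :: "nat list"
  assumes "n \<ge> 1"
    and "\<sigma> \<in> permutations_of_set {1..n}"
    and "avoids123 \<sigma>"
  shows "mu \<sigma> = Lprime (lam \<sigma>)"
proof -
  have st: "set \<sigma> = {1..n}" and d: "distinct \<sigma>" using assms(2) by (auto simp: permutations_of_set_def)
  have len: "length \<sigma> = n" using distinct_card[OF d] st by simp
  have P: "isperm \<sigma> n" using st d len by (simp add: isperm_def)
  have "mu \<sigma> = lam_aux (Suc n - 0) (map (\<lambda>x. Suc n - x) (rev \<sigma>))"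
    unfolding mu_def by (rule mu_aux_lam) (use st in auto)
  also have "\<dots> = lam (rc \<sigma>)" by (simp add: lam_def rc_def len)
  also have "\<dots> = Lprime (lam \<sigma>)" by (rule main[OF P assms(3)])
  finally show ?thesis .
qed

end
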